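(* Let $N$ be a finite set, $f: 2^{N} \to \mathbb{R} \cup \{-\infty\}$ an M$^\natural$-concave function, $X, Y \in \mathrm{dom}\, f$ and $I \subseteq X \setminus Y$. Put $C = X \cap Y$, $X_0 = X \setminus Y$, $Y_0 = Y \setminus X$, and for $J \subseteq Y_0$ define $f_1(J) = f((X_0 \setminus I)\cup C \cup J)$ and $f_2(J) = f(I \cup C \cup (Y_0 \setminus J))$. For $q \in \mathbb{R}^{Y_0}$ define $g_1(q) = \max_{J \subseteq Y_0}\{f_1(J) - q(J)\}$ and $g_2(q) = \max_{J \subseteq Y_0}\{f_2(J) - q(J)\}$, where $q(J) = \sum_{j \in J} q_j$. Then for every $q \in \mathbb{R}^{Y_0}$, $$g_1(q) + g_2(-q) \geq f(X) + f(Y).$$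
   Context: For $f: 2^N \to \mathbb{R}\cup\{-\infty\}$, $\mathrm{dom}\, f = \{X \subseteq N : f(X) > -\infty\}$. Notation: $X - i = X \setminus \{i\}$, $Y + i = Y \cup \{i\}$, $X - i + j = (X\setminus\{i\})\cup\{j\}$, $Y + i - j = (Y \cup\{i\})\setminus\{j\}$. Conventions: $(-\infty)+a = a+(-\infty) = (-\infty)+(-\infty) = -\infty$ for $a \in \mathbb{R}$, $-\infty \le -\infty$, and a maximum over an empty set is $-\infty$. A function $f: 2^N \to \mathbb{R}\cup\{-\infty\}$ with $\mathrm{dom}\, f \neq \emptyset$ is M$^\natural$-concave if for all $X, Y \subseteq N$ and $i \in X \setminus Y$: $$f(X)+f(Y) \le \max\Big[ f(X-i)+f(Y+i),\ \max_{j \in Y\setminus X}\{ f(X-i+j)+f(Y+i-j)\}\Big].$$ *)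

theory Defs
  imports "HOL-Library.Extended_Real"
begin

text \<open>A set function on the subsets of a ground set N, with values in R \<union> {-\<infinity>}
  (modelled as ereal, never +\<infinity>).  dom f = subsets of N with value > -\<infinity>.\<close>

definition Mnat_concave :: "'a set \<Rightarrow> ('a set \<Rightarrow> ereal) \<Rightarrow> bool" where
  "Mnat_concave N f \<longleftrightarrow>
     (\<forall>X. X \<subseteq> N \<longrightarrow> f X \<noteq> \<infinity>) \<and>
     (\<exists>X. X \<subseteq> N \<and> f X > -\<infinity>) \<and>
     (\<forall>X Y i. X \<subseteq> N \<longrightarrow> Y \<subseteq> N \<longrightarrow> i \<in> X - Y \<longrightarrow>
        f X + f Y \<le> max (f (X - {i}) + f (insert i Y))
                         (Max ({-\<infinity>} \<union> {f (insert j (X - {i})) + f (insert i Y - {j}) | j. j \<in> Y - X})))"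

end

theory Submission imports Defs begin

lemma Mnat_exch:
  assumes "Mnat_concave N f" "X \<subseteq> N" "Y \<subseteq> N" "i \<in> X - Y"
  shows "f X + f Y \<le> max (f (X - {i}) + f (insert i Y))
                         (Max ({-\<infinity>} \<union> {f (insert j (X - {i})) + f (insert i Y - {j}) | j. j \<in> Y - X}))"
  using assms unfolding Mnat_concave_def by blast
lemma Mnat_fin:
  assumes "Mnat_concave N f" "X \<subseteq> N"
  shows "f X \<noteq> \<infinity>"
  using assms unfolding Mnat_concave_def by blast

definition Gf :: "('a set \<Rightarrow> ereal) \<Rightarrow> ('a \<Rightarrow> real) \<Rightarrow> 'a set \<Rightarrow> 'a set \<Rightarrow> 'a set \<Rightarrow> ereal" where
  "Gf f q C Y0 T = Max {f (C \<union> T \<union> J) - ereal (sum q J) | J. J \<subseteq> Y0}"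

lemma Gf_set: "{f (C \<union> T \<union> J) - ereal (sum q J) | J. J \<subseteq> Y0} = (\<lambda>J. f (C \<union> T \<union> J) - ereal (sum q J)) ` Pow Y0"
  by auto

lemma Gf_attained:
  assumes "finite Y0"
  shows "\<exists>J\<subseteq>Y0. Gf f q C Y0 T = f (C \<union> T \<union> J) - ereal (sum q J)"
proof -
  have "Gf f q C Y0 T \<in> (\<lambda>J. f (C \<union> T \<union> J) - ereal (sum q J)) ` Pow Y0"
    unfolding Gf_def Gf_set using assms by (intro Max_in) auto
  then show ?thesis by auto
qed

lemma Gf_ge:
  assumes "finite Y0" "J \<subseteq> Y0"
  shows "f (C \<union> T \<union> J) - ereal (sum q J) \<le> Gf f q C Y0 T"
  unfolding Gf_def Gf_set using assms by (intro Max_ge) auto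

lemma Gf_ninf:
  assumes "finite Y0" "Mnat_concave N f" "C \<union> T \<union> Y0 \<subseteq> N"
  shows "Gf f q C Y0 T \<noteq> \<infinity>"
proof -
  obtain J where J: "J \<subseteq> Y0" "Gf f q C Y0 T = f (C \<union> T \<union> J) - ereal (sum q J)"
    using Gf_attained[OF assms(1), of f q C T] by blast
  have "C \<union> T \<union> J \<subseteq> N" using assms(3) J(1) by blast
  then have "f (C \<union> T \<union> J) \<noteq> \<infinity>" by (rule Mnat_fin[OF assms(2)])
  then show ?thesis unfolding J(2) by (cases "f (C \<union> T \<union> J)") simp_all
qed

lemma E1: fixes a b c d :: ereal
  assumes "a + b \<le> c + d" "x + y = x' + y'"
  shows "(a - ereal x) + (b - ereal y) \<le> (c - ereal x') + (d - ereal y')"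
proof -
  have 1: "(a - ereal x) + (b - ereal y) = (a+b) + (ereal (-x) + ereal (-y))"
    by (simp add: minus_ereal_def add.assoc add.left_commute)
  have 2: "(c - ereal x') + (d - ereal y') = (c+d) + (ereal (-x') + ereal (-y'))"
    by (simp add: minus_ereal_def add.assoc add.left_commute)
  have 3: "ereal (-x) + ereal (-y) = ereal (-x') + ereal (-y')" using assms(2) by simp
  show ?thesis unfolding 1 2 3 by (rule add_right_mono[OF assms(1)])
qed
lemma E2: fixes a b d e g h :: ereal
  assumes "a + d \<le> e + g" "e + b \<le> h + d"
   "a \<noteq> \<infinity>" "b \<noteq> \<infinity>" "d \<noteq> \<infinity>" "e \<noteq> \<infinity>" "g \<noteq> \<infinity>" "h \<noteq> \<infinity>"
   "a \<noteq> -\<infinity>" "b \<noteq> -\<infinity>" "d \<noteq> -\<infinity>"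
  shows "a + b \<le> h + g"
proof -
  obtain ra where a: "a = ereal ra" using assms by (cases a) auto
  obtain rb where b: "b = ereal rb" using assms by (cases b) auto
  obtain rd where d: "d = ereal rd" using assms by (cases d) auto
  show ?thesis using assms unfolding a b d by (cases e; cases g; cases h) auto
qed
lemma E0: fixes a b :: ereal
  assumes "a + b \<le> -\<infinity>"
  shows "(a - ereal x) + (b - ereal y) \<le> c"
proof -
  have 1: "(a - ereal x) + (b - ereal y) = (a+b) + (ereal (-x) + ereal (-y))"
    by (simp add: minus_ereal_def add.assoc add.left_commute)
  have 2: "a + b = -\<infinity>" using assms by (simp only: ereal_infty_less_eq(2))
  show ?thesis unfolding 1 2 by simp
qed

lemma Gf_exch:
  assumes M: "Mnat_concave N f" and fin: "finite Y0"
    and sub: "C \<subseteq> N" "X0 \<subseteq> N" "Y0 \<subseteq> N"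
    and dis: "C \<inter> X0 = {}" "C \<inter> Y0 = {}" "X0 \<inter> Y0 = {}"
    and QP: "Q \<subseteq> P" "P \<subseteq> X0" "i \<in> P" "i \<notin> Q"
  shows "Gf f q C Y0 P + Gf f q C Y0 Q \<le> Gf f q C Y0 (P - {i}) + Gf f q C Y0 (insert i Q)"
proof -
  obtain J1 where J1: "J1 \<subseteq> Y0" "Gf f q C Y0 P = f (C \<union> P \<union> J1) - ereal (sum q J1)"
    using Gf_attained[OF fin, of f q C P] by blast
  obtain J2 where J2: "J2 \<subseteq> Y0" "Gf f q C Y0 Q = f (C \<union> Q \<union> J2) - ereal (sum q J2)"
    using Gf_attained[OF fin, of f q C Q] by blast
  define A where "A = C \<union> P \<union> J1"
  define B where "B = C \<union> Q \<union> J2"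
  have AN: "A \<subseteq> N" "B \<subseteq> N" using sub QP J1 J2 unfolding A_def B_def by auto
  have iAB: "i \<in> A - B" using QP dis J2 unfolding A_def B_def by auto
  define S where "S = {-\<infinity>} \<union> {f (insert j (A - {i})) + f (insert i B - {j}) | j. j \<in> B - A}"
  have ex: "f A + f B \<le> max (f (A - {i}) + f (insert i B)) (Max S)"
    unfolding S_def by (rule Mnat_exch[OF M AN iAB])
  have key: "Gf f q C Y0 P + Gf f q C Y0 Q \<le> Gf f q C Y0 (P - {i}) + Gf f q C Y0 (insert i Q)"
    if h: "f A + f B \<le> f (C \<union> (P - {i}) \<union> J1') + f (C \<union> insert i Q \<union> J2')"
      and s: "sum q J1 + sum q J2 = sum q J1' + sum q J2'" and J': "J1' \<subseteq> Y0" "J2' \<subseteq> Y0" for J1' J2'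
  proof -
    have "Gf f q C Y0 P + Gf f q C Y0 Q \<le> (f (C \<union> (P - {i}) \<union> J1') - ereal (sum q J1')) + (f (C \<union> insert i Q \<union> J2') - ereal (sum q J2'))"
      unfolding J1(2) J2(2) using E1[OF h[unfolded A_def B_def] s] .
    also have "\<dots> \<le> Gf f q C Y0 (P - {i}) + Gf f q C Y0 (insert i Q)"
      by (intro add_mono Gf_ge fin J')
    finally show ?thesis .
  qed
  have finS: "finite S" unfolding S_def using AN(2) finite_subset[OF _ fin] 
  proof -
    have "{f (insert j (A - {i})) + f (insert i B - {j}) | j. j \<in> B - A} = (\<lambda>j. f (insert j (A - {i})) + f (insert i B - {j})) ` (B - A)" by auto
    moreover have "finite (B - A)"
    proof -
      have "B - A \<subseteq> J2" using QP unfolding A_def B_def by auto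
      then show ?thesis using finite_subset[OF J2(1) fin] finite_subset by blast
    qed
    ultimately show "finite ({-\<infinity>} \<union> {f (insert j (A - {i})) + f (insert i B - {j}) | j. j \<in> B - A})" by simp
  qed
  show ?thesis
  proof (cases "f A + f B \<le> f (A - {i}) + f (insert i B)")
    case True
    have e1: "A - {i} = C \<union> (P - {i}) \<union> J1" using iAB dis QP J1 unfolding A_def by auto
    have e2: "insert i B = C \<union> insert i Q \<union> J2" unfolding B_def by auto
    have h: "f A + f B \<le> f (C \<union> (P - {i}) \<union> J1) + f (C \<union> insert i Q \<union> J2)"
      using True unfolding e1 e2 .
    show ?thesis by (rule key[OF h _ J1(1) J2(1)]) simp
  next
    case False
    then have le: "f A + f B \<le> Max S" using ex by (simp add: le_max_iff_disj)
    have "Max S \<in> S" using finS unfolding S_def by (intro Max_in) auto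
    then consider "Max S = -\<infinity>" | j where "j \<in> B - A" "Max S = f (insert j (A - {i})) + f (insert i B - {j})"
      unfolding S_def by blast
    then show ?thesis
    proof cases
      case 1
      have "f (C \<union> P \<union> J1) + f (C \<union> Q \<union> J2) \<le> -\<infinity>" using le 1 unfolding A_def B_def by simp
      then show ?thesis unfolding J1(2) J2(2) by (rule E0)
    next
      case 2
      have jJ: "j \<in> J2" "j \<notin> J1" "j \<noteq> i" "j \<notin> C" "j \<notin> Q" using 2(1) QP unfolding A_def B_def by auto
      have e1: "insert j (A - {i}) = C \<union> (P - {i}) \<union> insert j J1" using iAB dis QP J1 jJ unfolding A_def by auto
      have e2: "insert i B - {j} = C \<union> insert i Q \<union> (J2 - {j})" using jJ unfolding B_def by auto
      have fJ1: "finite J1" "finite J2" using J1(1) J2(1) fin finite_subset by auto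
      have s: "sum q J1 + sum q J2 = sum q (insert j J1) + sum q (J2 - {j})"
        using jJ fJ1 by (simp add: sum.remove[of J2 j])
      have h: "f A + f B \<le> f (C \<union> (P - {i}) \<union> insert j J1) + f (C \<union> insert i Q \<union> (J2 - {j}))"
        using le unfolding 2(2) e1 e2 .
      show ?thesis by (rule key[OF h s]) (use jJ J1(1) J2(1) in auto)
    qed
  qed
qed

lemma Gf_sub:
  assumes M: "Mnat_concave N f" and fin: "finite Y0"
    and sub: "C \<subseteq> N" "X0 \<subseteq> N" "Y0 \<subseteq> N"
    and dis: "C \<inter> X0 = {}" "C \<inter> Y0 = {}" "X0 \<inter> Y0 = {}"
    and fI: "finite I" and PX: "P \<subseteq> X0"
  shows "\<forall>Q. Q \<subseteq> P \<longrightarrow> I \<subseteq> P - Q \<longrightarrow> -\<infinity> < Gf f q C Y0 P + Gf f q C Y0 Q \<longrightarrow>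
     Gf f q C Y0 P + Gf f q C Y0 Q \<le> Gf f q C Y0 (P - I) + Gf f q C Y0 (Q \<union> I)"
  using fI
proof (induction I rule: finite_induct)
  case empty
  then show ?case by simp
next
  case (insert i I')
  show ?case
  proof (intro allI impI)
    fix Q assume Q: "Q \<subseteq> P" "insert i I' \<subseteq> P - Q" "-\<infinity> < Gf f q C Y0 P + Gf f q C Y0 Q"
    have ninf: "Gf f q C Y0 T \<noteq> \<infinity>" if "T \<subseteq> X0" for T
      using Gf_ninf[OF fin M, of C T] that sub by auto
    have h0: "Gf f q C Y0 P + Gf f q C Y0 Q \<le> Gf f q C Y0 (P - {i}) + Gf f q C Y0 (insert i Q)"
      using Gf_exch[OF M fin sub dis Q(1) PX] Q(2) by blast
    have nP: "Gf f q C Y0 P \<noteq> -\<infinity>" "Gf f q C Y0 Q \<noteq> -\<infinity>" using Q PX ninf by auto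
    have "-\<infinity> < Gf f q C Y0 (P - {i}) + Gf f q C Y0 (insert i Q)" using Q(3) h0 by (rule less_le_trans)
    then have nQi: "Gf f q C Y0 (insert i Q) \<noteq> -\<infinity>" using ninf[of "P - {i}"] PX by auto
    have iQ: "insert i Q \<subseteq> X0" using Q PX by auto
    have c1: "insert i Q \<subseteq> P" "I' \<subseteq> P - insert i Q" using Q insert.hyps(2) by auto
    have c2: "-\<infinity> < Gf f q C Y0 P + Gf f q C Y0 (insert i Q)"
      using nP nQi ninf[OF iQ] ninf[OF PX] by simp
    have h1: "Gf f q C Y0 P + Gf f q C Y0 (insert i Q) \<le> Gf f q C Y0 (P - I') + Gf f q C Y0 (insert i Q \<union> I')"
      using insert.IH c1 c2 by blast
    have h2: "Gf f q C Y0 (P - I') + Gf f q C Y0 Q \<le> Gf f q C Y0 (P - I' - {i}) + Gf f q C Y0 (insert i Q)"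
      using Gf_exch[OF M fin sub dis, of Q "P - I'" i] Q PX insert.hyps(2) by blast
    have s1: "P - I' \<subseteq> X0" "P - I' - {i} \<subseteq> X0" "insert i Q \<union> I' \<subseteq> X0" "Q \<subseteq> X0" using PX Q by auto
    have "Gf f q C Y0 P + Gf f q C Y0 Q \<le> Gf f q C Y0 (P - I' - {i}) + Gf f q C Y0 (insert i Q \<union> I')"
      using ninf[OF PX] ninf[OF iQ] ninf[OF s1(1)] ninf[OF s1(2)] ninf[OF s1(3)] ninf[OF s1(4)] nP nQi
      by (intro E2[OF h1 h2]) auto
    moreover have "P - I' - {i} = P - insert i I'" "insert i Q \<union> I' = Q \<union> insert i I'" by auto
    ultimately show "Gf f q C Y0 P + Gf f q C Y0 Q \<le> Gf f q C Y0 (P - insert i I') + Gf f q C Y0 (Q \<union> insert i I')"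
      by simp
  qed
qed

lemma Max_set_ge:
  assumes "finite Y0" "J \<subseteq> Y0"
  shows "(h J :: ereal) \<le> Max {h J | J. J \<subseteq> Y0}"
proof -
  have "{h J | J. J \<subseteq> Y0} = h ` Pow Y0" by auto
  then show ?thesis using assms by (auto intro!: Max_ge)
qed

lemma E3: fixes a b :: ereal
  assumes "a - ereal s \<le> b" shows "a \<le> b + ereal s"
  using assms by (cases a; cases b) auto

lemma E4: fixes a :: ereal
  assumes "sum (\<lambda>j. - q j) J = k - s"
  shows "a - ereal k + ereal s = a - ereal (sum (\<lambda>j. - q j) J)"
  using assms by (cases a) auto

theorem lemma1:
  fixes N :: "'a set" and f :: "'a set \<Rightarrow> ereal" and X Y I :: "'a set" and q :: "'a \<Rightarrow> real"
  assumes "finite N"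
    and "Mnat_concave N f"
    and "X \<subseteq> N" and "Y \<subseteq> N" and "f X > -\<infinity>" and "f Y > -\<infinity>"
    and "I \<subseteq> X - Y"
  shows "let C = X \<inter> Y; X0 = X - Y; Y0 = Y - X;
             f1 = (\<lambda>J. f ((X0 - I) \<union> C \<union> J));
             f2 = (\<lambda>J. f (I \<union> C \<union> (Y0 - J)));
             g1 = (\<lambda>q. Max {f1 J - ereal (\<Sum>j\<in>J. q j) | J. J \<subseteq> Y0});
             g2 = (\<lambda>q. Max {f2 J - ereal (\<Sum>j\<in>J. q j) | J. J \<subseteq> Y0})
         in g1 q + g2 (\<lambda>j. - q j) \<ge> f X + f Y"
proof -
  define C where "C = X \<inter> Y"
  define X0 where "X0 = X - Y"
  define Y0 where "Y0 = Y - X"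
  note M = assms(2)
  have sub: "C \<subseteq> N" "X0 \<subseteq> N" "Y0 \<subseteq> N" using assms(3,4) unfolding C_def X0_def Y0_def by auto
  have dis: "C \<inter> X0 = {}" "C \<inter> Y0 = {}" "X0 \<inter> Y0 = {}" unfolding C_def X0_def Y0_def by auto
  have fin: "finite Y0" using finite_subset[OF sub(3) assms(1)] .
  have IX: "I \<subseteq> X0" using assms(7) unfolding X0_def .
  have fI: "finite I" using finite_subset[OF IX finite_subset[OF sub(2) assms(1)]] .
  have ninf: "Gf f q C Y0 T \<noteq> \<infinity>" if "T \<subseteq> X0" for T
  proof -
    have "C \<union> T \<union> Y0 \<subseteq> N" using that sub by blast
    then show ?thesis by (rule Gf_ninf[OF fin M])
  qed
  have gX: "f (C \<union> X0 \<union> {}) - ereal (sum q {}) \<le> Gf f q C Y0 X0" by (rule Gf_ge[OF fin]) simp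
  have eX: "C \<union> X0 \<union> {} = X" unfolding C_def X0_def by auto
  have gX': "f X \<le> Gf f q C Y0 X0" using gX unfolding eX by (simp add: zero_ereal_def)
  have gY: "f (C \<union> {} \<union> Y0) - ereal (sum q Y0) \<le> Gf f q C Y0 {}" by (rule Gf_ge[OF fin]) simp
  have eY: "C \<union> {} \<union> Y0 = Y" unfolding C_def Y0_def by auto
  have gY': "f Y \<le> Gf f q C Y0 {} + ereal (sum q Y0)" using gY unfolding eY by (rule E3)
  have n1: "Gf f q C Y0 X0 \<noteq> -\<infinity>" using gX' assms(5) by auto
  have n2: "Gf f q C Y0 {} \<noteq> -\<infinity>" using gY assms(6) unfolding eY by (cases "f Y") auto
  have pos: "-\<infinity> < Gf f q C Y0 X0 + Gf f q C Y0 {}"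
    using n1 n2 ninf[of X0] ninf[of "{}"] by auto
  have sm: "Gf f q C Y0 X0 + Gf f q C Y0 {} \<le> Gf f q C Y0 (X0 - I) + Gf f q C Y0 ({} \<union> I)"
  proof -
    have "\<forall>Q. Q \<subseteq> X0 \<longrightarrow> I \<subseteq> X0 - Q \<longrightarrow> -\<infinity> < Gf f q C Y0 X0 + Gf f q C Y0 Q \<longrightarrow>
     Gf f q C Y0 X0 + Gf f q C Y0 Q \<le> Gf f q C Y0 (X0 - I) + Gf f q C Y0 (Q \<union> I)"
      by (rule Gf_sub[OF M fin sub dis fI]) simp
    then have "{} \<subseteq> X0 \<longrightarrow> I \<subseteq> X0 - {} \<longrightarrow> -\<infinity> < Gf f q C Y0 X0 + Gf f q C Y0 {} \<longrightarrow>
     Gf f q C Y0 X0 + Gf f q C Y0 {} \<le> Gf f q C Y0 (X0 - I) + Gf f q C Y0 ({} \<union> I)"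
      by (rule spec)
    then show ?thesis using IX pos by blast
  qed
  define g1 where "g1 = Max {f ((X0 - I) \<union> C \<union> J) - ereal (\<Sum>j\<in>J. q j) | J. J \<subseteq> Y0}"
  define g2 where "g2 = Max {f (I \<union> C \<union> (Y0 - J)) - ereal (\<Sum>j\<in>J. - q j) | J. J \<subseteq> Y0}"
  have G1: "Gf f q C Y0 (X0 - I) \<le> g1"
  proof -
    obtain J where J: "J \<subseteq> Y0" "Gf f q C Y0 (X0 - I) = f (C \<union> (X0 - I) \<union> J) - ereal (sum q J)"
      using Gf_attained[OF fin, of f q C "X0 - I"] by blast
    have e: "C \<union> (X0 - I) \<union> J = (X0 - I) \<union> C \<union> J" by auto
    show ?thesis unfolding J(2) e g1_def
      by (rule Max_set_ge[OF fin J(1), where h = "\<lambda>J. f ((X0 - I) \<union> C \<union> J) - ereal (\<Sum>j\<in>J. q j)"])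
  qed
  have G2: "Gf f q C Y0 I + ereal (sum q Y0) \<le> g2"
  proof -
    obtain K where K: "K \<subseteq> Y0" "Gf f q C Y0 I = f (C \<union> I \<union> K) - ereal (sum q K)"
      using Gf_attained[OF fin, of f q C I] by blast
    have e: "C \<union> I \<union> K = I \<union> C \<union> (Y0 - (Y0 - K))" using K(1) by auto
    have sdiff: "sum q (Y0 - K) = sum q Y0 - sum q K" using sum_diff[OF fin K(1)] .
    have s: "sum (\<lambda>j. - q j) (Y0 - K) = sum q K - sum q Y0"
      by (simp add: sum_negf sdiff)
    have "Gf f q C Y0 I + ereal (sum q Y0) = f (I \<union> C \<union> (Y0 - (Y0 - K))) - ereal (\<Sum>j\<in>Y0 - K. - q j)"
      unfolding K(2) e by (rule E4[OF s])
    also have "\<dots> \<le> g2" unfolding g2_def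
      by (rule Max_set_ge[OF fin, where h = "\<lambda>J. f (I \<union> C \<union> (Y0 - J)) - ereal (\<Sum>j\<in>J. - q j)"]) auto
    finally show ?thesis .
  qed
  have "f X + f Y \<le> Gf f q C Y0 X0 + (Gf f q C Y0 {} + ereal (sum q Y0))"
    by (rule add_mono[OF gX' gY'])
  also have "\<dots> = (Gf f q C Y0 X0 + Gf f q C Y0 {}) + ereal (sum q Y0)" by (simp add: add.assoc)
  also have "\<dots> \<le> (Gf f q C Y0 (X0 - I) + Gf f q C Y0 I) + ereal (sum q Y0)"
    using sm by (intro add_right_mono) simp
  also have "\<dots> = Gf f q C Y0 (X0 - I) + (Gf f q C Y0 I + ereal (sum q Y0))" by (simp add: add.assoc)
  also have "\<dots> \<le> g1 + g2" by (rule add_mono[OF G1 G2])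
  finally have main: "f X + f Y \<le> g1 + g2" .
  show ?thesis unfolding Let_def C_def[symmetric] X0_def[symmetric] Y0_def[symmetric]
    using main unfolding g1_def g2_def by simp
qed

end
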